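(* Let $\langle R,<,+,\cdot\rangle$ be an ordered field, and let $E\subseteq R^2\times R^2$ be the relation $E(x,y,a,b)\iff y=ax+b$. Let $m\in R_{\ge0}$. Then $|E\cap B|=\Omega(n^{4/3})$ for finite $m$-distant $n$-grids $B\subseteq R^2\times R^2$; that is, there is a constant $c>0$ such that for arbitrarily large $n\in\mathbb N$ there is an $m$-distant $n$-grid $B=B_1\times B_2\subseteq R^2\times R^2$ with $|E\cap B|\ge c\,n^{4/3}$.
   Context: For $x\in R^2$, $|x|=\max(|x_1|,|x_2|)$. A set $X\subseteq R^2$ is $m$-distant if $|x-y|>m$ for all distinct $x,y\in X$. An $n$-grid in $R^2\times R^2$ is $B=B_1\times B_2$ with $B_1,B_2\subseteq R^2$ and $|B_1|=|B_2|=n$; it is $m$-distant if $B_1$ and $B_2$ are $m$-distant. *)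

theory Defs
  imports Complex_Main
begin

definition maxnorm :: "'a::linordered_field \<times> 'a \<Rightarrow> 'a" where
  "maxnorm x = max \<bar>fst x\<bar> \<bar>snd x\<bar>"

definition m_distant :: "'a::linordered_field \<Rightarrow> ('a \<times> 'a) set \<Rightarrow> bool" where
  "m_distant m X \<longleftrightarrow> (\<forall>x\<in>X. \<forall>y\<in>X. x \<noteq> y \<longrightarrow> maxnorm (fst x - fst y, snd x - snd y) > m)"

definition Erel :: "(('a::linordered_field \<times> 'a) \<times> ('a \<times> 'a)) set" where
  "Erel = {((x, y), (a, b)). y = a * x + b}"

end

theory Submission
  imports Defs
begin

lemma nat_diff_ge1:
  fixes i j :: nat
  assumes "i \<noteq> j"
  shows "(1::'a::linordered_field) \<le> \<bar>of_nat i - of_nat j\<bar>"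
proof -
  have "(of_nat i - of_nat j :: 'a) = of_int (int i - int j)" by simp
  moreover have "(1::int) \<le> \<bar>int i - int j\<bar>" using assms by auto
  ultimately show ?thesis
    by (metis of_int_1_le_iff of_int_abs)
qed

lemma scaled_diff:
  fixes D :: "'a::linordered_field" and i j :: nat
  assumes "i \<noteq> j" "D \<ge> 1"
  shows "D \<le> \<bar>of_nat i * D - of_nat j * D\<bar>"
proof -
  have "\<bar>of_nat i * D - of_nat j * D\<bar> = \<bar>of_nat i - of_nat j\<bar> * D"
    using assms by (simp add: left_diff_distrib[symmetric] abs_mult)
  moreover have "1 * D \<le> \<bar>of_nat i - of_nat j\<bar> * D"
    using nat_diff_ge1[OF assms(1), where 'a='a] assms(2) by (intro mult_right_mono) auto
  ultimately show ?thesis by simp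
qed

lemma powr_bound:
  fixes n t :: real
  assumes "0 \<le> n" "0 \<le> t" "n \<le> t ^ 3"
  shows "n powr (4/3) \<le> t ^ 4"
proof -
  have "n powr (1/3) \<le> (t ^ 3) powr (1/3)"
    using assms by (intro powr_mono2) auto
  also have "(t ^ 3) powr (1/3) = t"
  proof (cases "t = 0")
    case False
    then have tp: "t > 0" using assms by simp
    have "t ^ 3 = t powr 3" using tp by (simp add: powr_realpow)
    then have "(t ^ 3) powr (1/3) = t powr (3 * (1/3))" by (simp add: powr_powr)
    then show ?thesis using tp by simp
  qed simp
  finally have h: "n powr (1/3) \<le> t" .
  have "n powr (4/3) = (n powr (1/3)) ^ 4"
  proof (cases "n = 0")
    case False
    then have np: "n > 0" using assms by simp
    have "(n powr (1/3)) ^ 4 = (n powr (1/3)) powr 4"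
      using np by (simp add: powr_realpow)
    also have "\<dots> = n powr (4/3)" by (simp add: powr_powr)
    finally show ?thesis by simp
  qed simp
  also have "\<dots> \<le> t ^ 4" using h by (intro power_mono) auto
  finally show ?thesis .
qed

theorem proposition3p15:
  fixes m :: "'a::linordered_field"
  assumes "m \<ge> 0"
  shows "\<exists>c::real. c > 0 \<and>
    (\<forall>N::nat. \<exists>n\<ge>N. \<exists>B1 B2 :: ('a \<times> 'a) set.
       finite B1 \<and> finite B2 \<and> card B1 = n \<and> card B2 = n \<and>
       m_distant m B1 \<and> m_distant m B2 \<and>
       real (card (Erel \<inter> (B1 \<times> B2))) \<ge> c * real n powr (4/3))"
proof (intro exI[of _ "1/16"] conjI allI)
  fix N :: nat
  define k where "k = N + 1"
  define D where "D = m + 1"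
  have D1: "D \<ge> 1" using assms D_def by simp
  have D2: "D \<le> D * D" using D1 by (simp add: mult_le_cancel_left1)
  have Dm: "m < D" using D_def by simp
  define f where "f = (\<lambda>(i::nat, l::nat). (of_nat i * D, of_nat l * (D * D)))"
  define S where "S = {1..k} \<times> {1..2*k^2}"
  define B where "B = f ` S"
  have finj: "inj f"
  proof (rule injI)
    fix p q assume "f p = f q"
    then show "p = q" using D1 unfolding f_def
      by (cases p; cases q) auto
  qed
  have fB: "finite B" unfolding B_def S_def by simp
  have cB: "card B = 2 * k^3"
    unfolding B_def S_def using card_image[OF inj_on_subset[OF finj]]
    by (simp add: card_cartesian_product power2_eq_square power3_eq_cube)
  have mdB: "m_distant m B"
    unfolding m_distant_def B_def
  proof (intro ballI impI)
    fix x y assume "x \<in> f ` S" "y \<in> f ` S" "x \<noteq> y"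
    then obtain i l i' l' where x: "x = f (i, l)" and y: "y = f (i', l')"
      and ne: "(i, l) \<noteq> (i', l')" by auto
    show "m < maxnorm (fst x - fst y, snd x - snd y)"
    proof (cases "i = i'")
      case False
      have "D \<le> \<bar>of_nat i * D - of_nat i' * D\<bar>" using scaled_diff[OF False D1] .
      then show ?thesis using Dm unfolding maxnorm_def x y f_def by auto
    next
      case True
      then have "l \<noteq> l'" using ne by auto
      have "D * D \<le> \<bar>of_nat l * (D * D) - of_nat l' * (D*D)\<bar>"
        using scaled_diff[OF \<open>l \<noteq> l'\<close>, of "D*D"] D1 D2 by auto
      then show ?thesis using Dm D2 unfolding maxnorm_def x y f_def by auto
    qed
  qed
  define T where "T = {1..k} \<times> {1..k} \<times> {1..k^2}"
  define g where "g = (\<lambda>(x::nat, j::nat, l::nat). (f (x, j*x+l), f (j, l)))"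
  have ginj: "inj_on g T"
  proof (rule inj_onI)
    fix p q assume "p \<in> T" "q \<in> T" "g p = g q"
    then obtain x j l x' j' l' where p: "p = (x,j,l)" and q: "q = (x',j',l')"
      and e1: "f (x, j*x+l) = f (x', j'*x'+l')" and e2: "f (j,l) = f (j',l')"
      unfolding g_def by (cases p; cases q) auto
    from e1 e2 finj have "x = x'" "j = j'" "l = l'" "j*x+l = j'*x'+l'"
      by (auto dest: injD)
    then show "p = q" using p q by simp
  qed
  have gsub: "g ` T \<subseteq> Erel \<inter> (B \<times> B)"
  proof
    fix z assume "z \<in> g ` T"
    then obtain x j l where xs: "x \<in> {1..k}" "j \<in> {1..k}" "l \<in> {1..k^2}"
      and z: "z = g (x,j,l)" unfolding T_def by auto
    have "j * x \<le> k * k" using xs by (intro mult_le_mono) auto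
    then have "j*x+l \<in> {1..2*k^2}" using xs by (auto simp: power2_eq_square)
    then have "(x, j*x+l) \<in> S" "(j,l) \<in> S" using xs unfolding S_def
      by (auto simp: power2_eq_square)
    then have inB: "z \<in> B \<times> B" unfolding z g_def B_def by auto
    have "(of_nat (j*x+l) * (D*D) :: 'a) = (of_nat j * D) * (of_nat x * D) + of_nat l * (D*D)"
      by (simp add: algebra_simps)
    then have "z \<in> Erel" unfolding z g_def f_def Erel_def by simp
    with inB show "z \<in> Erel \<inter> (B \<times> B)" by simp
  qed
  have "card (g ` T) \<le> card (Erel \<inter> (B \<times> B))"
    using gsub fB by (intro card_mono) auto
  moreover have "card (g ` T) = k^4"
    using card_image[OF ginj] unfolding T_def
    by (simp add: card_cartesian_product power2_eq_square power4_eq_xxxx)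
  ultimately have inc: "real k ^ 4 \<le> real (card (Erel \<inter> (B \<times> B)))"
    by (metis of_nat_le_iff of_nat_power)
  have "real (2*k^3) powr (4/3) \<le> (2 * real k) ^ 4"
    by (intro powr_bound) (auto simp: power3_eq_cube)
  then have "1/16 * real (2*k^3) powr (4/3) \<le> real k ^ 4"
    by (simp add: power_mult_distrib)
  then have "1/16 * real (2*k^3) powr (4/3) \<le> real (card (Erel \<inter> (B \<times> B)))"
    using inc by linarith
  moreover have "2*k^3 \<ge> N"
  proof -
    have "N \<le> k" using k_def by simp
    also have "k \<le> k^3" using k_def by (simp add: self_le_power)
    finally show ?thesis by simp
  qed
  ultimately show "\<exists>n\<ge>N. \<exists>B1 B2 :: ('a \<times> 'a) set.
       finite B1 \<and> finite B2 \<and> card B1 = n \<and> card B2 = n \<and>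
       m_distant m B1 \<and> m_distant m B2 \<and>
       real (card (Erel \<inter> (B1 \<times> B2))) \<ge> 1/16 * real n powr (4/3)"
    using fB cB mdB by blast
qed simp

end
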